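(* Let $G_N=(V,E)$ be a connected, undirected, edge-weighted graph on $N$ nodes, let $r\ge1$, and let $p\in\{\mathrm{Bd},\mathrm{dB}\}$. Then there exists a node $v\in V$ such that $\rho^{p}_r(G_N,v)\ge \frac1N$.
   Context: Each edge $\{u,v\}$ has a positive weight $w(u,v)$ and $\deg(u)=\sum_v w(u,v)$. Each node is occupied by a resident (fitness 1) or a mutant (fitness $r\ge1$); $f(u)$ is the fitness at $u$, $F=\sum_u f(u)$. Moran Birth-death (Bd) process: each step a node $u$ is chosen with probability $f(u)/F$ and its offspring replaces a neighbor $v$ chosen with probability $w(u,v)/\deg(u)$. Moran death-Birth (dB) process: each step a uniformly random node $v$ dies and is replaced by the offspring of a neighbor $u$ chosen with probability $f(u)w(u,v)/\sum_{u'}f(u')w(u',v)$. $\rho^p_r(G_N,v)$ is the probability that mutants eventually occupy all nodes under process $p$ when initially only $v$ is a mutant. *)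

theory Defs
  imports Complex_Main
begin

datatype process = Bd | dB

definition fitness :: "real \<Rightarrow> 'v set \<Rightarrow> 'v \<Rightarrow> real" where
  "fitness r S u = (if u \<in> S then r else 1)"

definition wdeg :: "'v set \<Rightarrow> ('v \<Rightarrow> 'v \<Rightarrow> real) \<Rightarrow> 'v \<Rightarrow> real" where
  "wdeg V w u = (\<Sum>v\<in>V. w u v)"

text \<open>Probability that, in one step of process p from mutant set S, the offspring of u
  replaces the individual at v.\<close>
definition event_prob :: "process \<Rightarrow> real \<Rightarrow> 'v set \<Rightarrow> ('v \<Rightarrow> 'v \<Rightarrow> real) \<Rightarrow> 'v set \<Rightarrow> 'v \<Rightarrow> 'v \<Rightarrow> real" where
  "event_prob p r V w S u v =
     (case p of
        Bd \<Rightarrow> (fitness r S u / (\<Sum>x\<in>V. fitness r S x)) * (w u v / wdeg V w u)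
      | dB \<Rightarrow> (1 / real (card V)) * (fitness r S u * w u v / (\<Sum>x\<in>V. fitness r S x * w x v)))"

definition next_state :: "'v set \<Rightarrow> 'v \<Rightarrow> 'v \<Rightarrow> 'v set" where
  "next_state S u v = (if u \<in> S then insert v S else S - {v})"

fun reach_within :: "process \<Rightarrow> real \<Rightarrow> 'v set \<Rightarrow> ('v \<Rightarrow> 'v \<Rightarrow> real) \<Rightarrow> nat \<Rightarrow> 'v set \<Rightarrow> real" where
  "reach_within p r V w 0 S = (if S = V then 1 else 0)"
| "reach_within p r V w (Suc n) S =
     (if S = V then 1 else
        (\<Sum>u\<in>V. \<Sum>v\<in>V. event_prob p r V w S u v * reach_within p r V w n (next_state S u v)))"

definition fixation_prob :: "process \<Rightarrow> real \<Rightarrow> 'v set \<Rightarrow> ('v \<Rightarrow> 'v \<Rightarrow> real) \<Rightarrow> 'v \<Rightarrow> real" where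
  "fixation_prob p r V w v = (SUP n. reach_within p r V w n {v})"

text \<open>Connected undirected weighted graph on V: edges are pairs with positive weight.\<close>
definition weighted_graph :: "'v set \<Rightarrow> ('v \<Rightarrow> 'v \<Rightarrow> real) \<Rightarrow> bool" where
  "weighted_graph V w \<longleftrightarrow> finite V \<and> V \<noteq> {} \<and>
     (\<forall>u\<in>V. \<forall>v\<in>V. w u v = w v u \<and> w u v \<ge> 0) \<and> (\<forall>u\<in>V. w u u = 0)"

definition connected_wgraph :: "'v set \<Rightarrow> ('v \<Rightarrow> 'v \<Rightarrow> real) \<Rightarrow> bool" where
  "connected_wgraph V w \<longleftrightarrow>
     (\<forall>u\<in>V. \<forall>v\<in>V. (u, v) \<in> {(a, b). a \<in> V \<and> b \<in> V \<and> w a b > 0}\<^sup>*)"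

end

theory Submission
  imports Defs
begin

locale wgb =
  fixes p :: process and r :: real and V :: "'v set" and w :: "'v \<Rightarrow> 'v \<Rightarrow> real"
  assumes wg: "weighted_graph V w" and cg: "connected_wgraph V w" and r1: "1 \<le> r"
    and card2: "2 \<le> card V"
begin

lemma finV: "finite V" using wg by (simp add: weighted_graph_def)
lemma symw: "u \<in> V \<Longrightarrow> v \<in> V \<Longrightarrow> w u v = w v u" using wg by (simp add: weighted_graph_def)
lemma wnn: "u \<in> V \<Longrightarrow> v \<in> V \<Longrightarrow> 0 \<le> w u v" using wg by (simp add: weighted_graph_def)
lemma conn: "u \<in> V \<Longrightarrow> v \<in> V \<Longrightarrow> (u, v) \<in> {(a, b). a \<in> V \<and> b \<in> V \<and> w a b > 0}\<^sup>*"
  using cg by (simp add: connected_wgraph_def)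

lemma nbr: assumes "u \<in> V" shows "\<exists>b\<in>V. 0 < w u b"
proof -
  have "card (V - {u}) \<ge> 1" using card2 assms finV by (simp add: card_Diff_singleton)
  then obtain v where v: "v \<in> V" "v \<noteq> u"
    by (metis DiffE card.empty ex_in_conv insertCI not_one_le_zero)
  from conn[OF assms v(1)] show ?thesis
  proof (cases rule: converse_rtranclE)
    case base then show ?thesis using v by simp
  next
    case (step y) then show ?thesis by auto
  qed
qed

lemma cut:
  assumes "S \<subseteq> V" "a \<in> S" "b \<in> V" "b \<notin> S"
  shows "\<exists>u\<in>S. \<exists>v\<in>V-S. 0 < w u v"
proof -
  have "(a, b) \<in> {(a, b). a \<in> V \<and> b \<in> V \<and> w a b > 0}\<^sup>*" using conn assms by auto
  then have "b \<notin> S \<longrightarrow> (\<exists>u\<in>S. \<exists>v\<in>V-S. 0 < w u v)"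
  proof (induction rule: rtrancl_induct)
    case base then show ?case using assms by simp
  next
    case (step y z) then show ?case by (cases "y \<in> S") auto
  qed
  then show ?thesis using assms by simp
qed

lemma fit_ge1: "1 \<le> fitness r S x" using r1 by (simp add: fitness_def)
lemma fit_pos: "0 < fitness r S x" using fit_ge1[of S x] by linarith

lemma F_pos: "0 < (\<Sum>x\<in>V. fitness r S x)"
proof -
  have "V \<noteq> {}" using card2 by auto
  then show ?thesis by (rule sum_pos[OF finV]) (rule fit_pos)
qed

lemma deg_pos: assumes "u \<in> V" shows "0 < wdeg V w u"
proof -
  obtain b where "b \<in> V" "0 < w u b" using nbr assms by blast
  then show ?thesis unfolding wdeg_def using finV wnn assms
    by (intro sum_pos2[where i=b]) auto
qed

lemma D_pos: assumes "v \<in> V" shows "0 < (\<Sum>x\<in>V. fitness r S x * w x v)"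
proof -
  obtain b where "b \<in> V" "0 < w v b" using nbr assms by blast
  then have "0 < w b v" using symw assms by simp
  show ?thesis
  proof (rule sum_pos2[where i=b, OF finV \<open>b \<in> V\<close>])
    show "0 < fitness r S b * w b v" using fit_pos[of S b] \<open>0 < w b v\<close> by (rule mult_pos_pos)
    fix i assume "i \<in> V" then show "0 \<le> fitness r S i * w i v"
      using fit_pos[of S i] wnn[of i v] assms by simp
  qed
qed

abbreviation ep where "ep S u v \<equiv> event_prob p r V w S u v"

lemma ep_nonneg: "u \<in> V \<Longrightarrow> v \<in> V \<Longrightarrow> 0 \<le> ep S u v"
  using F_pos[of S] deg_pos[of u] D_pos[of v S] fit_pos[of S u] wnn[of u v]
  by (cases p) (auto simp: event_prob_def intro!: mult_nonneg_nonneg divide_nonneg_pos)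

lemma ep_pos: "u \<in> V \<Longrightarrow> v \<in> V \<Longrightarrow> 0 < w u v \<Longrightarrow> 0 < ep S u v"
  using F_pos[of S] deg_pos[of u] D_pos[of v S] fit_pos[of S u] card2
  by (cases p) (auto simp: event_prob_def intro!: mult_pos_pos divide_pos_pos)

lemma ep_sum: "(\<Sum>u\<in>V. \<Sum>v\<in>V. ep S u v) = 1"
proof (cases p)
  case Bd
  have "(\<Sum>u\<in>V. \<Sum>v\<in>V. ep S u v) = (\<Sum>u\<in>V. fitness r S u / (\<Sum>x\<in>V. fitness r S x))"
  proof (rule sum.cong[OF refl])
    fix u assume u: "u \<in> V"
    have "(\<Sum>v\<in>V. ep S u v) = fitness r S u / (\<Sum>x\<in>V. fitness r S x) * ((\<Sum>v\<in>V. w u v) / wdeg V w u)"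
      using Bd by (simp add: event_prob_def sum_distrib_left sum_divide_distrib)
    also have "\<dots> = fitness r S u / (\<Sum>x\<in>V. fitness r S x)"
      using deg_pos[OF u] by (simp add: wdeg_def)
    finally show "(\<Sum>v\<in>V. ep S u v) = fitness r S u / (\<Sum>x\<in>V. fitness r S x)" .
  qed
  also have "\<dots> = 1" using F_pos[of S] by (simp add: sum_divide_distrib[symmetric])
  finally show ?thesis .
next
  case dB
  have "(\<Sum>u\<in>V. \<Sum>v\<in>V. ep S u v) = (\<Sum>v\<in>V. \<Sum>u\<in>V. ep S u v)" by (rule sum.swap)
  also have "\<dots> = (\<Sum>v\<in>V. 1 / real (card V))"
  proof (rule sum.cong[OF refl])
    fix v assume v: "v \<in> V"
    have "(\<Sum>u\<in>V. ep S u v) = 1 / real (card V) * ((\<Sum>u\<in>V. fitness r S u * w u v) / (\<Sum>x\<in>V. fitness r S x * w x v))"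
      unfolding event_prob_def using dB by (simp only: process.case sum_distrib_left[symmetric] sum_divide_distrib[symmetric])
    also have "\<dots> = 1 / real (card V)" using D_pos[OF v, of S] by simp
    finally show "(\<Sum>u\<in>V. ep S u v) = 1 / real (card V)" .
  qed
  also have "\<dots> = 1" using card2 by simp
  finally show ?thesis .
qed

lemma next_sub: "S \<subseteq> V \<Longrightarrow> v \<in> V \<Longrightarrow> next_state S u v \<subseteq> V"
  by (auto simp: next_state_def)
lemma next_empty: "next_state {} u v = {}" by (simp add: next_state_def)

lemma V_ne: "V \<noteq> {}" using card2 by auto

end

locale fixs = wgb p r V w for p r and V :: "'v set" and w +
  fixes \<pi> :: "'v \<Rightarrow> real"
  assumes pi_pos: "\<And>x. x \<in> V \<Longrightarrow> 0 < \<pi> x" and pi_sum: "sum \<pi> V = 1"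
    and submart: "\<And>S. S \<subseteq> V \<Longrightarrow> S \<noteq> {} \<Longrightarrow> S \<noteq> V \<Longrightarrow>
       0 \<le> (\<Sum>u\<in>V. \<Sum>v\<in>V. ep S u v * (sum \<pi> (next_state S u v) - sum \<pi> S))"
begin

definition K :: "('v set \<Rightarrow> real) \<Rightarrow> 'v set \<Rightarrow> real" where
  "K g S = (if S = V then g V else (\<Sum>u\<in>V. \<Sum>v\<in>V. ep S u v * g (next_state S u v)))"

lemma K_mono: assumes "\<And>S. S \<subseteq> V \<Longrightarrow> g S \<le> h S" "S \<subseteq> V" shows "K g S \<le> K h S"
proof (cases "S = V")
  case True then show ?thesis using assms by (simp add: K_def)
next
  case False
  have "\<And>u v. u\<in>V \<Longrightarrow> v\<in>V \<Longrightarrow> ep S u v * g (next_state S u v) \<le> ep S u v * h (next_state S u v)"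
    by (rule mult_left_mono[OF assms(1)[OF next_sub[OF assms(2)]] ep_nonneg])
  then show ?thesis unfolding K_def using False by (simp add: sum_mono)
qed

lemma K_add: "K (\<lambda>S. g S + h S) S = K g S + K h S"
  by (simp add: K_def distrib_left sum.distrib)

lemma K_cmult: "K (\<lambda>S. c * g S) S = c * K g S"
  by (simp add: K_def sum_distrib_left mult_ac)

lemma K_const: "K (\<lambda>S. c) S = c"
proof -
  have "(\<Sum>u\<in>V. \<Sum>v\<in>V. ep S u v * c) = (\<Sum>u\<in>V. \<Sum>v\<in>V. ep S u v) * c"
    by (simp add: sum_distrib_right)
  then show ?thesis by (simp add: K_def ep_sum)
qed

lemma K_sum: "finite A \<Longrightarrow> K (\<lambda>S. \<Sum>k\<in>A. f k S) S = (\<Sum>k\<in>A. K (f k) S)"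
proof (induction A rule: finite_induct)
  case empty then show ?case using K_const[of 0 S] by simp
next
  case (insert x F)
  have "K (\<lambda>S. \<Sum>k\<in>insert x F. f k S) S = K (\<lambda>S. f x S + (\<Sum>k\<in>F. f k S)) S"
    using insert by simp
  also have "\<dots> = K (f x) S + K (\<lambda>S. \<Sum>k\<in>F. f k S) S" by (rule K_add)
  finally show ?case using insert by simp
qed

lemma K_empty: "K g {} = g {}"
proof -
  have "(\<Sum>u\<in>V. \<Sum>v\<in>V. ep {} u v * g {}) = (\<Sum>u\<in>V. \<Sum>v\<in>V. ep {} u v) * g {}"
    by (simp add: sum_distrib_right)
  then show ?thesis using V_ne by (simp add: K_def next_empty ep_sum)
qed

lemma it_mono: "(\<And>S. S \<subseteq> V \<Longrightarrow> g S \<le> h S) \<Longrightarrow> S \<subseteq> V \<Longrightarrow> (K^^n) g S \<le> (K^^n) h S"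
proof (induction n arbitrary: S)
  case 0 then show ?case by simp
next
  case (Suc n) then show ?case by (simp add: K_mono)
qed

lemma it_add: "(K^^n) (\<lambda>S. g S + h S) = (\<lambda>S. (K^^n) g S + (K^^n) h S)"
  by (induction n) (simp_all add: K_add)

lemma it_const: "(K^^n) (\<lambda>S. c) = (\<lambda>S. c)"
  by (induction n) (simp_all add: K_const)

definition ind :: "'v set \<Rightarrow> real" where "ind S = (if S = V then 1 else 0)"

lemma reach_eq: "reach_within p r V w n S = (K^^n) ind S"
proof (induction n arbitrary: S)
  case 0 then show ?case by (simp add: ind_def)
next
  case (Suc n)
  have "reach_within p r V w n V = 1" by (cases n) auto
  then show ?case using Suc by (simp add: K_def)
qed

abbreviation \<Phi> where "\<Phi> S \<equiv> sum \<pi> S"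

lemma Phi_nonneg: assumes "S \<subseteq> V" shows "0 \<le> \<Phi> S"
  using assms pi_pos by (intro sum_nonneg) (meson less_imp_le subsetD)

lemma Phi_le1: "S \<subseteq> V \<Longrightarrow> \<Phi> S \<le> 1"
  using pi_pos pi_sum finV by (metis sum_mono2 Diff_iff less_imp_le)

lemma K_Phi: assumes "S \<subseteq> V" shows "\<Phi> S \<le> K \<Phi> S"
proof -
  consider "S = V" | "S = {}" | "S \<noteq> V" "S \<noteq> {}" by blast
  then show ?thesis
  proof cases
    case 1 then show ?thesis by (simp add: K_def)
  next
    case 2 then show ?thesis by (simp add: K_empty)
  next
    case 3
    have "(\<Sum>u\<in>V. \<Sum>v\<in>V. ep S u v * \<Phi> (next_state S u v))
        = (\<Sum>u\<in>V. \<Sum>v\<in>V. ep S u v * (\<Phi> (next_state S u v) - \<Phi> S)) + (\<Sum>u\<in>V. \<Sum>v\<in>V. ep S u v) * \<Phi> S"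
      by (simp add: sum_distrib_right right_diff_distrib sum_subtractf)
    then show ?thesis using 3 submart[OF assms] by (simp add: K_def ep_sum)
  qed
qed

definition var where "var S = (\<Sum>u\<in>V. \<Sum>v\<in>V. ep S u v * (\<Phi> (next_state S u v) - \<Phi> S)^2)"

lemma var_pos: assumes "S \<subseteq> V" "S \<noteq> {}" "S \<noteq> V" shows "0 < var S"
proof -
  obtain a where a: "a \<in> S" using assms by auto
  obtain b where b: "b \<in> V" "b \<notin> S" using assms by auto
  obtain u0 v0 where uv: "u0 \<in> S" "v0 \<in> V - S" "0 < w u0 v0" using cut[OF assms(1) a b] by blast
  have u0: "u0 \<in> V" using uv assms by auto
  have fS: "finite S" using finV assms finite_subset by blast
  have nx: "\<Phi> (next_state S u0 v0) - \<Phi> S = \<pi> v0"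
    using uv fS by (simp add: next_state_def)
  have pos: "0 < ep S u0 v0 * (\<Phi> (next_state S u0 v0) - \<Phi> S)^2"
  proof -
    have "0 < \<pi> v0" using pi_pos uv by auto
    then show ?thesis using nx ep_pos[OF u0 _ uv(3)] uv by (intro mult_pos_pos) auto
  qed
  have nn: "\<And>u v. u \<in> V \<Longrightarrow> v \<in> V \<Longrightarrow> 0 \<le> ep S u v * (\<Phi> (next_state S u v) - \<Phi> S)^2"
    by (simp add: ep_nonneg)
  have "ep S u0 v0 * (\<Phi> (next_state S u0 v0) - \<Phi> S)^2 \<le> (\<Sum>v\<in>V. ep S u0 v * (\<Phi> (next_state S u0 v) - \<Phi> S)^2)"
    using uv u0 nn finV by (intro member_le_sum) auto
  also have "\<dots> \<le> var S" unfolding var_def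
    using u0 nn finV by (intro member_le_sum) (auto intro!: sum_nonneg)
  finally show ?thesis using pos by linarith
qed


lemma K_Phi2: assumes "S \<subseteq> V" "S \<noteq> {}" "S \<noteq> V"
  shows "(\<Phi> S)^2 + var S \<le> K (\<lambda>S. (\<Phi> S)^2) S"
proof -
  define M where "M = (\<Sum>u\<in>V. \<Sum>v\<in>V. ep S u v * (\<Phi> (next_state S u v) - \<Phi> S))"
  have "(\<Sum>u\<in>V. \<Sum>v\<in>V. ep S u v * (\<Phi> (next_state S u v))^2)
      = (\<Sum>u\<in>V. \<Sum>v\<in>V. ep S u v * (\<Phi> (next_state S u v) - \<Phi> S)^2
          + 2 * \<Phi> S * (ep S u v * (\<Phi> (next_state S u v) - \<Phi> S)) + (\<Phi> S)^2 * ep S u v)"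
    by (intro sum.cong refl) (simp add: power2_eq_square algebra_simps)
  also have "\<dots> = var S + 2 * \<Phi> S * M + (\<Phi> S)^2 * (\<Sum>u\<in>V. \<Sum>v\<in>V. ep S u v)"
    by (simp add: var_def M_def sum.distrib sum_distrib_left)
  finally have eq: "K (\<lambda>S. (\<Phi> S)^2) S = var S + 2 * \<Phi> S * M + (\<Phi> S)^2"
    using assms by (simp add: K_def ep_sum)
  have "0 \<le> M" unfolding M_def by (rule submart[OF assms])
  moreover have "0 \<le> \<Phi> S" by (rule Phi_nonneg[OF assms(1)])
  ultimately show ?thesis using eq by (simp add: mult_nonneg_nonneg)
qed

definition T where "T = {S. S \<subseteq> V \<and> S \<noteq> {} \<and> S \<noteq> V}"
definition \<delta> where "\<delta> = Min (var ` T)"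

lemma T_fin: "finite T"
proof -
  have "T \<subseteq> Pow V" by (auto simp: T_def)
  then show ?thesis using finV finite_subset by blast
qed

lemma T_ne: "T \<noteq> {}"
proof -
  obtain a where a: "a \<in> V" using V_ne by auto
  have "{a} \<noteq> V" using card2 by auto
  then have "{a} \<in> T" using a by (auto simp: T_def)
  then show ?thesis by auto
qed

lemma delta_pos: "0 < \<delta>"
  unfolding \<delta>_def using T_fin T_ne by (simp add: Min_gr_iff T_def var_pos)

lemma delta_le: "S \<in> T \<Longrightarrow> \<delta> \<le> var S"
  unfolding \<delta>_def using T_fin by simp

definition t :: "'v set \<Rightarrow> real" where "t S = (if S \<noteq> {} \<and> S \<noteq> V then 1 else 0)"

lemma K_Phi2_ge: assumes "S \<subseteq> V" shows "(\<Phi> S)^2 + \<delta> * t S \<le> K (\<lambda>S. (\<Phi> S)^2) S"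
proof -
  consider "S = V" | "S = {}" | "S \<noteq> V" "S \<noteq> {}" by blast
  then show ?thesis
  proof cases
    case 1 then show ?thesis by (simp add: K_def t_def)
  next
    case 2 then show ?thesis by (simp add: K_empty t_def)
  next
    case 3
    have "S \<in> T" using 3 assms by (simp add: T_def)
    then show ?thesis using K_Phi2[OF assms 3(2,1)] delta_le[of S] 3 by (simp add: t_def)
  qed
qed

lemma K_t: assumes "S \<subseteq> V" shows "K t S \<le> t S"
proof -
  consider "S = V" | "S = {}" | "S \<noteq> V" "S \<noteq> {}" by blast
  then show ?thesis
  proof cases
    case 1 then show ?thesis by (simp add: K_def)
  next
    case 2 then show ?thesis by (simp add: K_empty)
  next
    case 3
    have "K t S \<le> K (\<lambda>S. 1) S" by (rule K_mono) (auto simp: t_def assms)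
    then show ?thesis using 3 by (simp add: K_const t_def)
  qed
qed

lemma it_t_nonneg: "S \<subseteq> V \<Longrightarrow> 0 \<le> (K^^n) t S"
  using it_mono[of "\<lambda>S. 0" t S n] by (simp add: it_const t_def)

lemma it_le1: "(\<And>S. S \<subseteq> V \<Longrightarrow> g S \<le> 1) \<Longrightarrow> S \<subseteq> V \<Longrightarrow> (K^^n) g S \<le> 1"
  using it_mono[of g "\<lambda>S. 1" S n] by (simp add: it_const)

lemma it_t_step: "S \<subseteq> V \<Longrightarrow> (K^^Suc n) t S \<le> (K^^n) t S"
proof (induction n arbitrary: S)
  case 0 then show ?case by (simp add: K_t)
next
  case (Suc n)
  have "K ((K^^Suc n) t) S \<le> K ((K^^n) t) S" by (rule K_mono[OF Suc.IH Suc.prems])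
  then show ?case by simp
qed

lemma it_t_dec: "S \<subseteq> V \<Longrightarrow> k \<le> n \<Longrightarrow> (K^^n) t S \<le> (K^^k) t S"
proof (induction n)
  case 0 then show ?case by simp
next
  case (Suc n)
  show ?case
  proof (cases "k = Suc n")
    case False
    then have "k \<le> n" using Suc by simp
    then show ?thesis using Suc it_t_step[of S n] by simp
  qed simp
qed

lemma it_var: "S \<subseteq> V \<Longrightarrow> (\<Phi> S)^2 + \<delta> * (\<Sum>k<n. (K^^k) t S) \<le> (K^^n) (\<lambda>S. (\<Phi> S)^2) S"
proof (induction n arbitrary: S)
  case 0 then show ?case by simp
next
  case (Suc n)
  have "K (\<lambda>S. (\<Phi> S)^2 + \<delta> * (\<Sum>k<n. (K^^k) t S)) S \<le> K ((K^^n) (\<lambda>S. (\<Phi> S)^2)) S"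
    by (rule K_mono[OF Suc.IH Suc.prems])
  moreover have "K (\<lambda>S. (\<Phi> S)^2 + \<delta> * (\<Sum>k<n. (K^^k) t S)) S
      = K (\<lambda>S. (\<Phi> S)^2) S + \<delta> * (\<Sum>k<n. (K^^Suc k) t S)"
    by (simp add: K_add K_cmult K_sum)
  moreover have "(\<Sum>k<Suc n. (K^^k) t S) = t S + (\<Sum>k<n. (K^^Suc k) t S)"
    unfolding sum.lessThan_Suc_shift by simp
  ultimately show ?case using K_Phi2_ge[OF Suc.prems] by (simp add: algebra_simps)
qed

lemma it_t_bound: assumes "S \<subseteq> V" shows "real n * \<delta> * (K^^n) t S \<le> 1"
proof -
  have "(\<Sum>k<n. (K^^n) t S) \<le> (\<Sum>k<n. (K^^k) t S)"
    by (intro sum_mono it_t_dec assms) simp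
  then have "real n * (K^^n) t S \<le> (\<Sum>k<n. (K^^k) t S)" by simp
  then have "\<delta> * (real n * (K^^n) t S) \<le> \<delta> * (\<Sum>k<n. (K^^k) t S)"
    using delta_pos by (simp add: mult_left_mono)
  also have "\<dots> \<le> 1"
  proof -
    have A: "(\<Phi> S)^2 + \<delta> * (\<Sum>k<n. (K^^k) t S) \<le> (K^^n) (\<lambda>S. (\<Phi> S)^2) S"
      by (rule it_var[OF assms])
    have B: "(K^^n) (\<lambda>S. (\<Phi> S)^2) S \<le> 1"
    proof (rule it_le1[OF _ assms])
      fix S' :: "'v set" assume "S' \<subseteq> V"
      then show "(\<Phi> S')^2 \<le> 1" using Phi_nonneg Phi_le1 by (simp add: power_le_one)
    qed
    have C: "0 \<le> (\<Phi> S)^2" by simp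
    from A B C show ?thesis by linarith
  qed
  finally show ?thesis by (simp add: mult_ac)
qed

lemma it_Phi: "S \<subseteq> V \<Longrightarrow> \<Phi> S \<le> (K^^n) \<Phi> S"
proof (induction n arbitrary: S)
  case 0 then show ?case by simp
next
  case (Suc n)
  have "K \<Phi> S \<le> K ((K^^n) \<Phi>) S" by (rule K_mono[OF Suc.IH Suc.prems])
  then show ?case using K_Phi[OF Suc.prems] by simp
qed

lemma reach_lower: assumes "S \<subseteq> V" shows "\<Phi> S - (K^^n) t S \<le> reach_within p r V w n S"
proof -
  have "(K^^n) \<Phi> S \<le> (K^^n) (\<lambda>S. ind S + t S) S"
    by (rule it_mono[OF _ assms]) (auto simp: ind_def t_def Phi_le1 pi_sum)
  then show ?thesis using it_Phi[OF assms, of n] by (simp add: it_add reach_eq)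
qed

lemma fix_lower: assumes "S \<subseteq> V" shows "\<Phi> S \<le> (SUP n. reach_within p r V w n S)"
proof (rule field_le_epsilon)
  fix e :: real assume e: "0 < e"
  have bdd: "bdd_above (range (\<lambda>n. reach_within p r V w n S))"
    using it_le1[of ind S] assms by (intro bdd_aboveI[where M=1]) (auto simp: reach_eq ind_def)
  obtain n where n: "1 / (\<delta> * e) < real n" using reals_Archimedean2 by blast
  have pe: "0 < \<delta> * e" using delta_pos e by simp
  have "0 < 1 / (\<delta> * e)" using pe by simp
  then have n0: "0 < real n" using n by linarith
  have "1 < real n * (\<delta> * e)" using n pe by (simp add: field_simps)
  then have gt: "1 < real n * \<delta> * e" by (simp add: mult.assoc)
  have "(K^^n) t S < e"
  proof (rule ccontr)
    assume "\<not> (K^^n) t S < e"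
    then have "e \<le> (K^^n) t S" by simp
    moreover have "0 \<le> real n * \<delta>" using n0 delta_pos by simp
    ultimately have "real n * \<delta> * e \<le> real n * \<delta> * (K^^n) t S" by (rule mult_left_mono)
    then show False using gt it_t_bound[OF assms, of n] by linarith
  qed
  then have "\<Phi> S \<le> reach_within p r V w n S + e" using reach_lower[OF assms, of n] by simp
  also have "\<dots> \<le> (SUP n. reach_within p r V w n S) + e"
    using cSUP_upper[OF _ bdd] by simp
  finally show "\<Phi> S \<le> (SUP n. reach_within p r V w n S) + e" .
qed

lemma main: "\<exists>v\<in>V. fixation_prob p r V w v \<ge> 1 / real (card V)"
proof (rule ccontr)
  assume "\<not> ?thesis"
  then have lt: "\<And>v. v \<in> V \<Longrightarrow> fixation_prob p r V w v < 1 / real (card V)" by force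
  have "\<And>v. v \<in> V \<Longrightarrow> \<pi> v < 1 / real (card V)"
  proof -
    fix v assume v: "v \<in> V"
    have "\<Phi> {v} \<le> fixation_prob p r V w v" unfolding fixation_prob_def
      by (rule fix_lower) (simp add: v)
    then show "\<pi> v < 1 / real (card V)" using lt[OF v] by simp
  qed
  then have "sum \<pi> V < (\<Sum>v\<in>V. 1 / real (card V))"
    using finV V_ne by (intro sum_strict_mono) auto
  also have "\<dots> = 1" using card2 by simp
  finally show False using pi_sum by simp
qed
end


definition piB :: "'v set \<Rightarrow> ('v \<Rightarrow> 'v \<Rightarrow> real) \<Rightarrow> 'v \<Rightarrow> real" where
  "piB V w x = (1 / wdeg V w x) / (\<Sum>y\<in>V. 1 / wdeg V w y)"
definition piD :: "'v set \<Rightarrow> ('v \<Rightarrow> 'v \<Rightarrow> real) \<Rightarrow> 'v \<Rightarrow> real" where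
  "piD V w x = wdeg V w x / (\<Sum>y\<in>V. wdeg V w y)"

context wgb
begin

lemma delta:
  fixes \<pi> :: "'v \<Rightarrow> real"
  assumes "S \<subseteq> V" "v \<in> V"
  shows "sum \<pi> (next_state S u v) - sum \<pi> S
     = (if u \<in> S \<and> v \<notin> S then \<pi> v else 0) - (if u \<notin> S \<and> v \<in> S then \<pi> v else 0)"
proof -
  have fS: "finite S" using finV assms finite_subset by blast
  show ?thesis using fS by (cases "u \<in> S"; cases "v \<in> S") (auto simp: next_state_def sum_diff1 insert_absorb)
qed

lemma piB_pos: "x \<in> V \<Longrightarrow> 0 < piB V w x"
proof -
  have "0 < (\<Sum>y\<in>V. 1 / wdeg V w y)" using finV V_ne deg_pos by (intro sum_pos) auto
  then show "x \<in> V \<Longrightarrow> 0 < piB V w x" using deg_pos[of x] by (simp add: piB_def)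
qed

lemma piB_sum: "sum (piB V w) V = 1"
proof -
  have "0 < (\<Sum>y\<in>V. 1 / wdeg V w y)" using finV V_ne deg_pos by (intro sum_pos) auto
  then show ?thesis unfolding piB_def by (subst sum_divide_distrib[symmetric]) simp
qed

lemma piD_pos: "x \<in> V \<Longrightarrow> 0 < piD V w x"
proof -
  have "0 < (\<Sum>y\<in>V. wdeg V w y)" using finV V_ne deg_pos by (intro sum_pos) auto
  then show "x \<in> V \<Longrightarrow> 0 < piD V w x" using deg_pos[of x] by (simp add: piD_def)
qed

lemma piD_sum: "sum (piD V w) V = 1"
proof -
  have "0 < (\<Sum>y\<in>V. wdeg V w y)" using finV V_ne deg_pos by (intro sum_pos) auto
  then show ?thesis unfolding piD_def by (subst sum_divide_distrib[symmetric]) simp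
qed

lemma submart_Bd:
  assumes p: "p = Bd" and S: "S \<subseteq> V"
  shows "0 \<le> (\<Sum>u\<in>V. \<Sum>v\<in>V. ep S u v * (sum (piB V w) (next_state S u v) - sum (piB V w) S))"
proof -
  define F where "F = (\<Sum>x\<in>V. fitness r S x)"
  define Z where "Z = (\<Sum>y\<in>V. 1 / wdeg V w y)"
  define X where "X u v = w u v / (wdeg V w u * wdeg V w v * Z * F)" for u v
  have Fp: "0 < F" unfolding F_def by (rule F_pos)
  have Zp: "0 < Z" unfolding Z_def using finV V_ne deg_pos by (intro sum_pos) auto
  have pt: "ep S u v * (sum (piB V w) (next_state S u v) - sum (piB V w) S)
      = r * (if u \<in> S \<and> v \<notin> S then X u v else 0) - (if u \<notin> S \<and> v \<in> S then X u v else 0)"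
    if u: "u \<in> V" and v: "v \<in> V" for u v
  proof -
    have du: "0 < wdeg V w u" by (rule deg_pos[OF u])
    have dv: "0 < wdeg V w v" by (rule deg_pos[OF v])
    have fu: "fitness r S u = (if u \<in> S then r else 1)" by (simp add: fitness_def)
    show ?thesis unfolding delta[OF S v] using du dv Fp Zp
      by (cases "u \<in> S"; cases "v \<in> S")
         (simp_all add: event_prob_def p fu X_def piB_def Z_def[symmetric] F_def[symmetric] field_simps)
  qed
  define C where "C = (\<Sum>u\<in>V. \<Sum>v\<in>V. if u \<in> S \<and> v \<notin> S then X u v else 0)"
  define C' where "C' = (\<Sum>u\<in>V. \<Sum>v\<in>V. if u \<notin> S \<and> v \<in> S then X u v else 0)"
  have "(\<Sum>u\<in>V. \<Sum>v\<in>V. ep S u v * (sum (piB V w) (next_state S u v) - sum (piB V w) S))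
      = (\<Sum>u\<in>V. \<Sum>v\<in>V. r * (if u \<in> S \<and> v \<notin> S then X u v else 0) - (if u \<notin> S \<and> v \<in> S then X u v else 0))"
    using pt by (intro sum.cong refl) auto
  also have "\<dots> = r * C - C'"
    by (simp add: C_def C'_def sum_subtractf sum_distrib_left)
  finally have eq: "(\<Sum>u\<in>V. \<Sum>v\<in>V. ep S u v * (sum (piB V w) (next_state S u v) - sum (piB V w) S)) = r * C - C'" .
  have Xsym: "X u v = X v u" if "u \<in> V" "v \<in> V" for u v
    using symw[OF that] by (simp add: X_def mult_ac)
  have "C' = (\<Sum>v\<in>V. \<Sum>u\<in>V. if u \<notin> S \<and> v \<in> S then X u v else 0)"
    unfolding C'_def by (rule sum.swap)
  also have "\<dots> = C" unfolding C_def using Xsym by (intro sum.cong refl) auto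
  finally have CC: "C' = C" .
  have Xnn: "0 \<le> X u v" if "u \<in> V" "v \<in> V" for u v
    using wnn[OF that] deg_pos[OF that(1)] deg_pos[OF that(2)] Zp Fp by (simp add: X_def)
  have "0 \<le> C" unfolding C_def using Xnn by (intro sum_nonneg) auto
  then have "1 * C \<le> r * C" using r1 by (intro mult_right_mono) auto
  then show ?thesis using eq CC by linarith
qed


lemma submart_dB:
  assumes p: "p = dB" and S: "S \<subseteq> V"
  shows "0 \<le> (\<Sum>u\<in>V. \<Sum>v\<in>V. ep S u v * (sum (piD V w) (next_state S u v) - sum (piD V w) S))"
proof -
  define Z where "Z = (\<Sum>y\<in>V. wdeg V w y)"
  define N where "N = real (card V)"
  define D where "D v = (\<Sum>x\<in>V. fitness r S x * w x v)" for v
  define a where "a v = (\<Sum>u\<in>V. if u \<in> S then w u v else 0)" for v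
  define b where "b v = (\<Sum>u\<in>V. if u \<in> S then 0 else w u v)" for v
  have Zp: "0 < Z" unfolding Z_def using finV V_ne deg_pos by (intro sum_pos) auto
  have Np: "0 < N" unfolding N_def using card2 by simp
  have Dp: "0 < D v" if "v \<in> V" for v unfolding D_def by (rule D_pos[OF that])
  have an: "0 \<le> a v" if "v \<in> V" for v unfolding a_def using wnn that by (intro sum_nonneg) auto
  have bn: "0 \<le> b v" if "v \<in> V" for v unfolding b_def using wnn that by (intro sum_nonneg) auto
  have deg_ab: "wdeg V w v = a v + b v" if v: "v \<in> V" for v
  proof -
    have "wdeg V w v = (\<Sum>x\<in>V. (if x \<in> S then w x v else 0) + (if x \<in> S then 0 else w x v))"
      unfolding wdeg_def using symw v by (intro sum.cong refl) auto
    then show ?thesis by (simp add: a_def b_def sum.distrib)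
  qed
  have D_ab: "D v = r * a v + b v" if v: "v \<in> V" for v
  proof -
    have "D v = (\<Sum>x\<in>V. r * (if x \<in> S then w x v else 0) + (if x \<in> S then 0 else w x v))"
      unfolding D_def by (intro sum.cong refl) (simp add: fitness_def)
    then show ?thesis by (simp add: a_def b_def sum.distrib sum_distrib_left)
  qed
  have Dc: "(\<Sum>x\<in>V. w x v * fitness r S x) = D v" for v by (simp add: D_def mult.commute)
  define \<Delta> where "\<Delta> u v = sum (piD V w) (next_state S u v) - sum (piD V w) S" for u v
  have inner: "(\<Sum>u\<in>V. ep S u v * \<Delta> u v)
     = (if v \<notin> S then r * a v * wdeg V w v / (N * D v * Z) else 0)
       - (if v \<in> S then b v * wdeg V w v / (N * D v * Z) else 0)" if v: "v \<in> V" for v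
  proof (cases "v \<in> S")
    case True
    have "(\<Sum>u\<in>V. ep S u v * \<Delta> u v) = (\<Sum>u\<in>V. (- (wdeg V w v / (N * D v * Z))) * (if u \<in> S then 0 else w u v))"
    proof (intro sum.cong refl)
      fix u assume u: "u \<in> V"
      have fu: "fitness r S u = (if u \<in> S then r else 1)" by (simp add: fitness_def)
      show "ep S u v * \<Delta> u v = (- (wdeg V w v / (N * D v * Z))) * (if u \<in> S then 0 else w u v)"
        unfolding \<Delta>_def delta[OF S v] using True Dp[OF v] Zp Np
        by (cases "u \<in> S") (simp_all add: event_prob_def p fu piD_def Z_def[symmetric] N_def[symmetric]
              D_def[symmetric] Dc field_simps)
    qed
    also have "\<dots> = (- (wdeg V w v / (N * D v * Z))) * b v"
      unfolding b_def by (rule sum_distrib_left[symmetric])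
    finally show ?thesis using True by simp
  next
    case False
    have "(\<Sum>u\<in>V. ep S u v * \<Delta> u v) = (\<Sum>u\<in>V. (r * wdeg V w v / (N * D v * Z)) * (if u \<in> S then w u v else 0))"
    proof (intro sum.cong refl)
      fix u assume u: "u \<in> V"
      have fu: "fitness r S u = (if u \<in> S then r else 1)" by (simp add: fitness_def)
      show "ep S u v * \<Delta> u v = (r * wdeg V w v / (N * D v * Z)) * (if u \<in> S then w u v else 0)"
        unfolding \<Delta>_def delta[OF S v] using False Dp[OF v] Zp Np
        by (cases "u \<in> S") (simp_all add: event_prob_def p fu piD_def Z_def[symmetric] N_def[symmetric]
              D_def[symmetric] Dc field_simps)
    qed
    also have "\<dots> = (r * wdeg V w v / (N * D v * Z)) * a v"
      unfolding a_def by (rule sum_distrib_left[symmetric])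
    finally show ?thesis using False by simp
  qed
  have lower: "(if v \<notin> S then a v else 0) / (N * Z) - (if v \<in> S then b v else 0) / (N * Z)
      \<le> (\<Sum>u\<in>V. ep S u v * \<Delta> u v)" if v: "v \<in> V" for v
  proof -
    have q: "0 < N * D v * Z" using Np Dp[OF v] Zp by simp
    have ab: "0 \<le> a v * b v" using an[OF v] bn[OF v] by simp
    have rab: "a v * b v \<le> r * (a v * b v)" using mult_right_mono[OF r1 ab] by simp
    show ?thesis
    proof (cases "v \<in> S")
      case True
      have "b v * (a v + b v) \<le> b v * (r * a v + b v)" using rab by (simp add: algebra_simps)
      then have "b v * (a v + b v) \<le> b v * D v" using D_ab[OF v] by simp
      then have "b v * (a v + b v) / (N * D v * Z) \<le> b v * D v / (N * D v * Z)"
        by (rule divide_right_mono) (use q in simp)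
      also have "\<dots> = b v / (N * Z)" using Dp[OF v] by simp
      finally show ?thesis unfolding inner[OF v] using True deg_ab[OF v] by simp
    next
      case False
      have "a v * (r * a v + b v) \<le> r * a v * (a v + b v)" using rab by (simp add: algebra_simps)
      then have "a v * D v \<le> r * a v * (a v + b v)" using D_ab[OF v] by simp
      then have "a v * D v / (N * D v * Z) \<le> r * a v * (a v + b v) / (N * D v * Z)"
        by (rule divide_right_mono) (use q in simp)
      moreover have "a v * D v / (N * D v * Z) = a v / (N * Z)" using Dp[OF v] by simp
      ultimately show ?thesis unfolding inner[OF v] using False deg_ab[OF v] by simp
    qed
  qed
  have cutL: "(\<Sum>v\<in>V. if v \<notin> S then a v else 0) = (\<Sum>v\<in>V. \<Sum>u\<in>V. if v \<notin> S \<and> u \<in> S then w u v else 0)"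
    by (intro sum.cong refl) (simp add: a_def)
  have "(\<Sum>v\<in>V. if v \<in> S then b v else 0) = (\<Sum>v\<in>V. \<Sum>u\<in>V. if v \<in> S \<and> u \<notin> S then w u v else 0)"
    by (intro sum.cong refl) (auto simp: b_def intro!: sum.cong)
  also have "\<dots> = (\<Sum>u\<in>V. \<Sum>v\<in>V. if v \<in> S \<and> u \<notin> S then w u v else 0)" by (rule sum.swap)
  also have "\<dots> = (\<Sum>v\<in>V. \<Sum>u\<in>V. if v \<notin> S \<and> u \<in> S then w u v else 0)"
    using symw by (intro sum.cong refl) auto
  finally have cutR: "(\<Sum>v\<in>V. if v \<in> S then b v else 0) = (\<Sum>v\<in>V. \<Sum>u\<in>V. if v \<notin> S \<and> u \<in> S then w u v else 0)" .
  have "(\<Sum>v\<in>V. (if v \<notin> S then a v else 0) / (N * Z) - (if v \<in> S then b v else 0) / (N * Z))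
      = ((\<Sum>v\<in>V. if v \<notin> S then a v else 0) - (\<Sum>v\<in>V. if v \<in> S then b v else 0)) / (N * Z)"
    by (simp add: sum_subtractf sum_divide_distrib diff_divide_distrib)
  also have "\<dots> = 0" using cutL cutR by simp
  finally have z: "(\<Sum>v\<in>V. (if v \<notin> S then a v else 0) / (N * Z) - (if v \<in> S then b v else 0) / (N * Z)) = 0" .
  have "0 \<le> (\<Sum>v\<in>V. \<Sum>u\<in>V. ep S u v * \<Delta> u v)"
    using z lower by (metis (no_types, lifting) sum_mono)
  also have "\<dots> = (\<Sum>u\<in>V. \<Sum>v\<in>V. ep S u v * \<Delta> u v)" by (rule sum.swap)
  finally show ?thesis unfolding \<Delta>_def .
qed
end


theorem mainTheorem6:
  fixes V :: "'v set" and w :: "'v \<Rightarrow> 'v \<Rightarrow> real" and r :: real and p :: process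
  assumes "weighted_graph V w"
    and "connected_wgraph V w"
    and "r \<ge> 1"
  shows "\<exists>v\<in>V. fixation_prob p r V w v \<ge> 1 / real (card V)"
proof -
  have fin: "finite V" and ne: "V \<noteq> {}" using assms(1) by (auto simp: weighted_graph_def)
  show ?thesis
  proof (cases "card V = 1")
    case True
    then obtain v0 where V: "V = {v0}" by (auto simp: card_1_singleton_iff)
    have "reach_within p r V w n {v0} = 1" for n using V by (cases n) auto
    then show ?thesis using V by (auto simp: fixation_prob_def)
  next
    case False
    have "card V \<noteq> 0" using fin ne by simp
    then have c2: "2 \<le> card V" using False by linarith
    interpret B: wgb p r V w by unfold_locales (use assms c2 in auto)
    show ?thesis
    proof (cases p)
      case Bd
      interpret F: fixs p r V w "piB V w"
        by unfold_locales (use B.piB_pos B.piB_sum B.submart_Bd Bd in auto)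
      show ?thesis by (rule F.main)
    next
      case dB
      interpret F: fixs p r V w "piD V w"
        by unfold_locales (use B.piD_pos B.piD_sum B.submart_dB dB in auto)
      show ?thesis by (rule F.main)
    qed
  qed
qed

end
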